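(* Let $n$ and $\rho$ be positive integers with $\rho<n/2$, and let ${\cal C}$ be a binary $[n\times n,\,n(n-2\rho),\,2\rho+1]$ linear array code (the paper uses the optimal array code of this kind constructed by Roth). Define the binary code over graphs $\mathcal{C}_{{\cal G}_2}=\{G=(V_n,L)\mid A_G\in{\cal C}\}$. Then $\mathcal{C}_{{\cal G}_2}$ is a linear binary code over graphs of dimension $k_{\cal G}=n(n-2\rho)$ which is $\rho$-node-erasure-correcting.
   Context: $[n]=\{0,\ldots,n-1\}$, $V_n=\{v_0,\ldots,v_{n-1}\}$. A binary graph $G=(V_n,L)$ is a complete directed graph with self loops and labeling $L:V_n\times V_n\to\{0,1\}$; its adjacency matrix is the $n\times n$ matrix $A_G=[a_{i,j}]$ with $a_{i,j}=L(v_i,v_j)$. A cover of an $n\times n$ matrix $\Gamma=[\gamma_{i,j}]$ is a pair $(S,T)$ of subsets of $[n]$ such that $\gamma_{i,j}\neq0$ implies $i\in S$ or $j\in T$; the cover-weight $w(\Gamma)$ is the minimum of $|S|+|T|$ over all covers. An $[n\times n,k,d]$ linear array code over a field is a $k$-dimensional linear space of $n\times n$ matrices over that field in which every nonzero matrix has cover-weight at least $d$ (with $d$ the minimum). A failure of node $i$ erases the labels of all edges $(v_i,v_j)$ and $(v_j,v_i)$, $j\in[n]$ (i.e., row $i$ and column $i$ of $A_G$), with the failed indices known. A code over graphs is $\rho$-node-erasure-correcting if for every graph in the code and any $\rho$ failed nodes, the erased labels are uniquely determined; its dimension is $\log_2$ of its size. *)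

theory Defs
  imports Complex_Main "HOL-Library.Z2" "HOL-Library.Function_Algebras"
begin

text \<open>Binary n x n matrices (and binary labelings of the complete directed graph with
self loops on V_n = {v_0,...,v_(n-1)}) are represented as functions
nat => nat => bit which vanish outside [n] x [n]; vertex v_i is identified with index i.\<close>

type_synonym bmat = "nat \<Rightarrow> nat \<Rightarrow> bit"

definition bscale :: "bit \<Rightarrow> bmat \<Rightarrow> bmat" where
  "bscale c A = (\<lambda>i j. c * A i j)"

definition bmats :: "nat \<Rightarrow> bmat set" where
  "bmats n = {A. \<forall>i j. (n \<le> i \<or> n \<le> j) \<longrightarrow> A i j = 0}"

definition is_cover :: "nat \<Rightarrow> bmat \<Rightarrow> nat set \<Rightarrow> nat set \<Rightarrow> bool" where
  "is_cover n \<Gamma> S T \<longleftrightarrow> S \<subseteq> {..<n} \<and> T \<subseteq> {..<n} \<and>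
     (\<forall>i<n. \<forall>j<n. \<Gamma> i j \<noteq> 0 \<longrightarrow> i \<in> S \<or> j \<in> T)"

definition cover_weight :: "nat \<Rightarrow> bmat \<Rightarrow> nat" where
  "cover_weight n \<Gamma> = Min {card S + card T | S T. is_cover n \<Gamma> S T}"

definition linear_array_code :: "nat \<Rightarrow> nat \<Rightarrow> nat \<Rightarrow> bmat set \<Rightarrow> bool" where
  "linear_array_code n k d C \<longleftrightarrow>
     C \<subseteq> bmats n \<and> module.subspace bscale C \<and> vector_space.dim bscale C = k \<and>
     (\<forall>A\<in>C. A \<noteq> 0 \<longrightarrow> d \<le> cover_weight n A) \<and>
     (\<exists>A\<in>C. A \<noteq> 0 \<and> cover_weight n A = d)"

definition graphs :: "nat \<Rightarrow> bmat set" where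
  "graphs n = bmats n"

definition adj_matrix :: "bmat \<Rightarrow> bmat" where
  "adj_matrix L = (\<lambda>i j. L i j)"

definition graph_code_of :: "nat \<Rightarrow> bmat set \<Rightarrow> bmat set" where
  "graph_code_of n C = {G \<in> graphs n. adj_matrix G \<in> C}"

definition linear_graph_code :: "nat \<Rightarrow> bmat set \<Rightarrow> bool" where
  "linear_graph_code n CG \<longleftrightarrow> CG \<subseteq> graphs n \<and> module.subspace bscale CG"

definition graph_code_dim :: "bmat set \<Rightarrow> real" where
  "graph_code_dim CG = log 2 (real (card CG))"

text \<open>rho-node-erasure-correcting: after the failure of any rho nodes F (which erases row
and column i of the adjacency matrix for every i in F), the erased labels are uniquely
determined by the non-erased ones.\<close>

definition node_erasure_correcting :: "nat \<Rightarrow> nat \<Rightarrow> bmat set \<Rightarrow> bool" where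
  "node_erasure_correcting n \<rho> CG \<longleftrightarrow>
     (\<forall>F. F \<subseteq> {..<n} \<and> card F = \<rho> \<longrightarrow>
       (\<forall>G\<in>CG. \<forall>G'\<in>CG.
          (\<forall>i<n. \<forall>j<n. i \<notin> F \<and> j \<notin> F \<longrightarrow> G i j = G' i j) \<longrightarrow> G = G'))"

end

theory Submission
  imports Defs "HOL-Library.FuncSet"
begin

lemma bit01: "(k::bit) = 0 \<or> k = 1"
  by (metis bit_not_one_iff)

interpretation BV: vector_space bscale
  by unfold_locales (auto simp: bscale_def fun_eq_iff algebra_simps)

lemma bit_self: "(x::bit) + x = 0" by (cases x) simp_all
lemma bmat_self: "(b::bmat) + b = 0" by (simp add: fun_eq_iff del: add_bit_eq_xor add: bit_self)
lemma bmat_c1: "(b::bmat) + y + b = y" by (metis add.assoc add.commute bmat_self add_0_right)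
lemma bmat_c2: "(x::bmat) + b + b = x" by (metis add.assoc bmat_self add_0_right)
lemma bmat_c3: "(b::bmat) + (x + b) = x" by (metis add.commute bmat_c2)

lemma bmat_minus: "(x::bmat) - y = x + y"
  by (auto simp: fun_eq_iff)

lemma span_insert_bit:
  assumes "b \<notin> BV.span B"
  shows "BV.span (insert b B) = BV.span B \<union> (\<lambda>x. b + x) ` BV.span B"
    and "BV.span B \<inter> (\<lambda>x. b + x) ` BV.span B = {}"
proof -
  have s1: "bscale 1 b = b" by (simp only: bscale_def mult_1_left)
  have s0: "bscale 0 b = 0" by (simp add: bscale_def fun_eq_iff)
  show "BV.span (insert b B) = BV.span B \<union> (\<lambda>x. b + x) ` BV.span B"
  proof (rule set_eqI)
    fix x
    have "x \<in> BV.span (insert b B) \<longleftrightarrow> (\<exists>k. x - bscale k b \<in> BV.span B)"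
      by (simp add: BV.span_insert)
    also have "\<dots> \<longleftrightarrow> x \<in> BV.span B \<or> x + b \<in> BV.span B"
    proof -
      have ex: "(\<exists>k. P k) \<longleftrightarrow> P 0 \<or> P 1" for P :: "bit \<Rightarrow> bool"
      proof
        assume "\<exists>k. P k"
        then obtain k where k: "P k" ..
        show "P 0 \<or> P 1"
        proof (cases "k = 0")
          case True then show ?thesis using k by simp
        next
          case False then have "k = 1" by simp
          then show ?thesis using k by simp
        qed
      next
        assume "P 0 \<or> P 1" then show "\<exists>k. P k" by blast
      qed
      show ?thesis unfolding ex s0 s1 bmat_minus by simp
    qed
    also have "\<dots> \<longleftrightarrow> x \<in> BV.span B \<union> (\<lambda>x. b + x) ` BV.span B"
    proof -
      have "x + b \<in> BV.span B \<longleftrightarrow> x \<in> (\<lambda>x. b + x) ` BV.span B"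
      proof
        assume h: "x + b \<in> BV.span B"
        show "x \<in> (\<lambda>x. b + x) ` BV.span B"
          by (rule image_eqI[where f="\<lambda>x. b + x", OF bmat_c3[symmetric] h])
      next
        assume "x \<in> (\<lambda>x. b + x) ` BV.span B"
        then obtain y where "y \<in> BV.span B" "x = b + y" by auto
        moreover have "b + y + b = y" by (rule bmat_c1)
        ultimately show "x + b \<in> BV.span B" by simp
      qed
      then show ?thesis by auto
    qed
    finally show "x \<in> BV.span (insert b B) \<longleftrightarrow> x \<in> BV.span B \<union> (\<lambda>x. b + x) ` BV.span B" .
  qed
  show "BV.span B \<inter> (\<lambda>x. b + x) ` BV.span B = {}"
  proof (rule ccontr)
    assume "BV.span B \<inter> (\<lambda>x. b + x) ` BV.span B \<noteq> {}"
    then obtain y where y: "y \<in> BV.span B" "b + y \<in> BV.span B" by auto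
    have "b + y + y = b" by (rule bmat_c2)
    with BV.span_add[OF y(2) y(1)] assms show False by simp
  qed
qed

lemma card_span_indep:
  assumes "finite B" "BV.independent B"
  shows "finite (BV.span B) \<and> card (BV.span B) = 2 ^ card B"
  using assms
proof (induction B rule: finite_induct)
  case empty
  then show ?case by simp
next
  case (insert b B)
  have bn: "b \<notin> BV.span B"
    using insert.prems insert.hyps(2) BV.independent_insert by auto
  have iB: "BV.independent B" using insert.prems BV.independent_mono by blast
  from insert.IH[OF iB] have IH: "finite (BV.span B)" "card (BV.span B) = 2 ^ card B" by auto
  have inj: "inj_on (\<lambda>x. b + x) (BV.span B)" by (rule inj_onI) simp
  have fin: "finite (BV.span (insert b B))"
    using IH span_insert_bit(1)[OF bn] by simp
  have "card (BV.span (insert b B)) = card (BV.span B) + card ((\<lambda>x. b + x) ` BV.span B)"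
    using span_insert_bit[OF bn] IH by (simp add: card_Un_disjoint)
  also have "\<dots> = 2 ^ card (insert b B)"
    using IH card_image[OF inj] insert.hyps by simp
  finally show ?case using fin by simp
qed

lemma finite_bit: "finite (UNIV::bit set)"
  by (rule finite_subset[of _ "{0,1}"]) (use bit01 in auto)

lemma finite_bmats: "finite (bmats n)"
proof -
  let ?S = "{..<n} \<times> {..<n}"
  have "bmats n \<subseteq> (\<lambda>g i j. if i < n \<and> j < n then g (i, j) else 0) ` (PiE ?S (\<lambda>_. UNIV :: bit set))"
  proof
    fix A assume A: "A \<in> bmats n"
    show "A \<in> (\<lambda>g i j. if i < n \<and> j < n then g (i, j) else 0) ` (PiE ?S (\<lambda>_. UNIV :: bit set))"
    proof (rule image_eqI[of _ _ "restrict (\<lambda>(i,j). A i j) ?S"])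
      show "A = (\<lambda>i j. if i < n \<and> j < n then restrict (\<lambda>(i, j). A i j) ?S (i, j) else 0)"
        using A by (auto simp: bmats_def fun_eq_iff not_less restrict_def)
    qed auto
  qed
  moreover have "finite (PiE ?S (\<lambda>_. UNIV :: bit set))"
    by (rule finite_PiE) (auto simp: finite_bit)
  ultimately show ?thesis by (meson finite_imageI finite_subset)
qed

theorem theorem2:
  fixes n \<rho> :: nat and C :: "bmat set"
  assumes "0 < n" and "0 < \<rho>" and "2 * \<rho> < n"
    and "linear_array_code n (n * (n - 2 * \<rho>)) (2 * \<rho> + 1) C"
  shows "linear_graph_code n (graph_code_of n C)
    \<and> graph_code_dim (graph_code_of n C) = real (n * (n - 2 * \<rho>))
    \<and> node_erasure_correcting n \<rho> (graph_code_of n C)"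
proof -
  from assms(4) have Cb: "C \<subseteq> bmats n" and sub: "BV.subspace C"
    and dimC: "BV.dim C = n * (n - 2 * \<rho>)"
    and wt: "\<And>A. A \<in> C \<Longrightarrow> A \<noteq> 0 \<Longrightarrow> 2 * \<rho> + 1 \<le> cover_weight n A"
    unfolding linear_array_code_def by auto
  have GC: "graph_code_of n C = C"
    using Cb by (auto simp: graph_code_of_def graphs_def adj_matrix_def)
  have lin: "linear_graph_code n (graph_code_of n C)"
    using GC Cb sub by (simp add: linear_graph_code_def graphs_def)
  obtain B where B: "B \<subseteq> C" "BV.independent B" "C \<subseteq> BV.span B" "card B = BV.dim C"
    by (rule BV.basis_exists)
  have finB: "finite B" by (rule finite_subset[OF subset_trans[OF B(1) Cb] finite_bmats])
  have spanB: "BV.span B = C"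
    using B(1,3) BV.span_minimal[OF B(1) sub] by auto
  have cardC: "card C = 2 ^ (n * (n - 2 * \<rho>))"
    using card_span_indep[OF finB B(2)] spanB B(4) dimC by simp
  have dimG: "graph_code_dim (graph_code_of n C) = real (n * (n - 2 * \<rho>))"
    using GC cardC by (simp add: graph_code_dim_def)
  have nec: "node_erasure_correcting n \<rho> C"
    unfolding node_erasure_correcting_def
  proof (intro allI impI ballI)
    fix F G G'
    assume F: "F \<subseteq> {..<n} \<and> card F = \<rho>" and G: "G \<in> C" and G': "G' \<in> C"
      and agree: "\<forall>i<n. \<forall>j<n. i \<notin> F \<and> j \<notin> F \<longrightarrow> G i j = G' i j"
    let ?D = "G + G'"
    have DC: "?D \<in> C" using G G' sub BV.subspace_add by blast
    have cov: "is_cover n ?D F F"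
      unfolding is_cover_def using F agree
      by (force simp: plus_fun_def bit_self simp del: add_bit_eq_xor)
    have finset: "finite {card S + card T | S T. is_cover n ?D S T}"
    proof -
      have "{card S + card T | S T. is_cover n ?D S T} \<subseteq>
            (\<lambda>(S, T). card S + card T) ` (Pow {..<n} \<times> Pow {..<n})"
        by (auto simp: is_cover_def)
      then show ?thesis by (rule finite_subset) auto
    qed
    have "cover_weight n ?D \<le> card F + card F"
      unfolding cover_weight_def using cov finset by (intro Min_le) auto
    then have "cover_weight n ?D \<le> 2 * \<rho>" using F by simp
    then have D0: "?D = 0"
    proof (rule contrapos_pp)
      assume "?D \<noteq> 0"
      from wt[OF DC this] show "\<not> cover_weight n ?D \<le> 2 * \<rho>" by linarith
    qed
    have "G = G + G' + G'" by (rule bmat_c2[symmetric])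
    also have "\<dots> = G'" unfolding D0 by (rule add_0_left)
    finally show "G = G'" .
  qed
  show ?thesis using lin dimG nec unfolding GC by blast
qed

end
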